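(* Fix an integer $k\ge1$ and let $o^{(k)}_{n,i}$ be the probability that a random Bernoulli text of length $n$ contains exactly $i$ clumps of $w$ that consist of exactly $k$ occurrences of $w$ ($k$-clumps). Define $$\mathfrak{K}^{(k)}(z,v)=\pi_w z^{\ell}\left(\frac{1}{1-K(z)}+(v-1)K(z)^{k-1}\right).$$ Then $$\sum_{n,i\ge0}o^{(k)}_{n,i}\,v^i z^n=N(z)+\frac{R(z)}{\pi_w z^{\ell}}\,\mathfrak{K}^{(k)}(z,v)\,\frac{1}{1-\dfrac{M(z)-K(z)}{\pi_w z^{\ell}}\,\mathfrak{K}^{(k)}(z,v)}\,U(z).$$
   Context: Let $\mathcal{A}$ be a finite alphabet with $|\mathcal{A}|\ge2$ and $w\in\mathcal{A}^*$ a fixed word of length $\ell=|w|\ge 2$. Bernoulli model: each letter $a$ has probability $p_a>0$, $\sum_a p_a=1$, $\mathbf{P}(a_1\cdots a_n)=\prod_i p_{a_i}$; for a language $L$, $L(z)=\sum_{x\in L}\mathbf{P}(x)z^{|x|}$; $\pi_w=\mathbf{P}(w)$. Occurrences of $w$ are position intervals where $w$ appears; two occurrences overlap if their intervals share a position; clumps are equivalence classes of occurrences under the transitive closure of overlapping; a $k$-clump is a clump containing exactly $k$ occurrences. Autocorrelation set $\mathcal{C}=\{\epsilon\}\cup\{e\in\mathcal{A}^+: |e|<\ell,\ \exists e'\in\mathcal{A}^+,\ we=e'w\}$, $\mathcal{C}_\circ=\mathcal{C}\setminus\{\epsilon\}$, $\mathcal{K}=\mathcal{C}_\circ\setminus\mathcal{C}_\circ\mathcal{A}^+$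 with generating function $K(z)$. Languages: $\mathcal{R}=\{r\in\mathcal{A}^*w: \text{no } r=xwy,\ |y|>0\}$; $\mathcal{M}=\{m\in\mathcal{A}^+: wm\in\mathcal{A}^*w,\ \text{no } wm=xwy,\ |x|>0,|y|>0\}$; $\mathcal{U}=\{u\in\mathcal{A}^*: \text{no } wu=xwy,\ |x|>0\}$; $\mathcal{N}=\{n: w\text{ not a factor of }n\}$, with generating functions $R,M,U,N$; explicitly, with $C(z)$ the generating function of $\mathcal{C}$ and $D(z)=\pi_w z^{\ell}+(1-z)C(z)$: $R=\pi_w z^\ell/D$, $M=1+(z-1)/D$, $U=1/D$, $N=C/D$. *)

theory Defs
  imports "HOL-Computational_Algebra.Formal_Power_Series"
begin

text \<open>Words are lists over a finite alphabet type 'a. Positions are 0-based.\<close>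

definition wprob :: "('a \<Rightarrow> real) \<Rightarrow> 'a list \<Rightarrow> real" where
  "wprob p x = prod_list (map p x)"

definition lang_gf :: "('a \<Rightarrow> real) \<Rightarrow> 'a list set \<Rightarrow> complex fps" where
  "lang_gf p L = Abs_fps (\<lambda>n. of_real (\<Sum>x\<in>{x\<in>L. length x = n}. wprob p x))"

definition occs :: "'a list \<Rightarrow> 'a list \<Rightarrow> nat set" where
  "occs w t = {j. j + length w \<le> length t \<and> take (length w) (drop j t) = w}"

definition overlap :: "'a list \<Rightarrow> nat \<Rightarrow> nat \<Rightarrow> bool" where
  "overlap w j j' \<longleftrightarrow> j < j' + length w \<and> j' < j + length w"

definition clump_rel :: "'a list \<Rightarrow> 'a list \<Rightarrow> nat rel" where
  "clump_rel w t = {(j, j'). j \<in> occs w t \<and> j' \<in> occs w t \<and> overlap w j j'}\<^sup>*"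

definition clumps :: "'a list \<Rightarrow> 'a list \<Rightarrow> nat set set" where
  "clumps w t = occs w t // clump_rel w t"

definition num_kclumps :: "nat \<Rightarrow> 'a list \<Rightarrow> 'a list \<Rightarrow> nat" where
  "num_kclumps k w t = card {c \<in> clumps w t. card c = k}"

definition kclump_prob :: "('a \<Rightarrow> real) \<Rightarrow> 'a list \<Rightarrow> nat \<Rightarrow> nat \<Rightarrow> nat \<Rightarrow> real" where
  "kclump_prob p w k n i = (\<Sum>t\<in>{t. length t = n \<and> num_kclumps k w t = i}. wprob p t)"

definition autocorr :: "'a list \<Rightarrow> 'a list set" where
  "autocorr w = {[]} \<union> {e. e \<noteq> [] \<and> length e < length w \<and> (\<exists>e'. e' \<noteq> [] \<and> w @ e = e' @ w)}"

definition autocorr0 :: "'a list \<Rightarrow> 'a list set" where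
  "autocorr0 w = autocorr w - {[]}"

definition Klang :: "'a list \<Rightarrow> 'a list set" where
  "Klang w = {e \<in> autocorr0 w. \<not> (\<exists>c\<in>autocorr0 w. \<exists>u. u \<noteq> [] \<and> e = c @ u)}"

definition Rlang :: "'a list \<Rightarrow> 'a list set" where
  "Rlang w = {r. (\<exists>x. r = x @ w) \<and> \<not> (\<exists>x y. r = x @ w @ y \<and> y \<noteq> [])}"

definition Mlang :: "'a list \<Rightarrow> 'a list set" where
  "Mlang w = {m. m \<noteq> [] \<and> (\<exists>x. w @ m = x @ w) \<and>
                 \<not> (\<exists>x y. w @ m = x @ w @ y \<and> x \<noteq> [] \<and> y \<noteq> [])}"

definition Ulang :: "'a list \<Rightarrow> 'a list set" where
  "Ulang w = {u. \<not> (\<exists>x y. w @ u = x @ w @ y \<and> x \<noteq> [])}"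

definition Nlang :: "'a list \<Rightarrow> 'a list set" where
  "Nlang w = {n. \<not> (\<exists>x y. n = x @ w @ y)}"

definition piz :: "('a \<Rightarrow> real) \<Rightarrow> 'a list \<Rightarrow> complex fps" where
  "piz p w = fps_const (of_real (wprob p w)) * fps_X ^ length w"

text \<open>The series frak K^(k)(z,v), for a fixed complex value of v.\<close>
definition frakK :: "('a \<Rightarrow> real) \<Rightarrow> 'a list \<Rightarrow> nat \<Rightarrow> complex \<Rightarrow> complex fps" where
  "frakK p w k v = piz p w *
     (1 / (1 - lang_gf p (Klang w)) + fps_const (v - 1) * lang_gf p (Klang w) ^ (k - 1))"

end

theory Submission
  imports Defs
begin

definition Bs :: "nat \<Rightarrow> nat set \<Rightarrow> nat rel" where
  "Bs l S = {(a,b). a \<in> S \<and> b \<in> S \<and> a < b + l \<and> b < a + l}"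

lemma Bs_sym: "(x,y) \<in> (Bs l S)\<^sup>* \<Longrightarrow> (y,x) \<in> (Bs l S)\<^sup>*"
proof -
  have "sym (Bs l S)" by (auto simp: sym_def Bs_def)
  then have "sym ((Bs l S)\<^sup>*)" by (rule sym_rtrancl)
  then show "(x,y) \<in> (Bs l S)\<^sup>* \<Longrightarrow> (y,x) \<in> (Bs l S)\<^sup>*" by (auto dest: symD)
qed

lemma Bs_sub: "(x,y) \<in> (Bs l S)\<^sup>* \<Longrightarrow> x \<in> S \<Longrightarrow> y \<in> S"
  by (induction rule: rtrancl_induct) (auto simp: Bs_def)

lemma quot_char:
  assumes "\<And>X. X\<in>P \<Longrightarrow> X \<subseteq> S" "\<And>X. X\<in>P \<Longrightarrow> X \<noteq> {}" "\<And>x. x\<in>S \<Longrightarrow> \<exists>X\<in>P. x\<in>X"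
    "\<And>X x y. X\<in>P \<Longrightarrow> x\<in>X \<Longrightarrow> y\<in>X \<Longrightarrow> (x,y)\<in>B\<^sup>*"
    "\<And>x y X. (x,y)\<in>B \<Longrightarrow> X\<in>P \<Longrightarrow> x\<in>X \<Longrightarrow> y\<in>X"
  shows "S // B\<^sup>* = P"
proof -
  have key: "B\<^sup>*``{x} = X" if "X \<in> P" "x \<in> X" for X x
  proof
    show "B\<^sup>*``{x} \<subseteq> X"
    proof
      fix y assume "y \<in> B\<^sup>*``{x}"
      then have "(x,y) \<in> B\<^sup>*" by simp
      then show "y \<in> X" by (induction rule: rtrancl_induct) (use that assms(5) in blast)+
    qed
    show "X \<subseteq> B\<^sup>*``{x}" using assms(4) that by blast
  qed
  show ?thesis
  proof
    show "S // B\<^sup>* \<subseteq> P"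
      unfolding quotient_def using assms(3) key by fastforce
    show "P \<subseteq> S // B\<^sup>*"
    proof
      fix X assume X: "X \<in> P"
      then obtain x where "x \<in> X" using assms(2) by blast
      then show "X \<in> S // B\<^sup>*" unfolding quotient_def using key X assms(1) by blast
    qed
  qed
qed

definition cls :: "nat \<Rightarrow> nat set \<Rightarrow> nat set set" where
  "cls l S = S // (Bs l S)\<^sup>*"

lemma cls_sub: "X \<in> cls l S \<Longrightarrow> X \<subseteq> S"
  unfolding cls_def by (erule quotientE) (use Bs_sub in blast)

lemma cls_ne: "X \<in> cls l S \<Longrightarrow> X \<noteq> {}"
  unfolding cls_def by (erule quotientE) blast

lemma cls_cover: "x \<in> S \<Longrightarrow> (Bs l S)\<^sup>*``{x} \<in> cls l S \<and> x \<in> (Bs l S)\<^sup>*``{x}"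
  unfolding cls_def by (simp add: quotientI)

lemma cls_conn: "X \<in> cls l S \<Longrightarrow> x \<in> X \<Longrightarrow> y \<in> X \<Longrightarrow> (x,y) \<in> (Bs l S)\<^sup>*"
  unfolding cls_def
proof (erule quotientE)
  fix z assume "X = (Bs l S)\<^sup>* `` {z}" "x \<in> X" "y \<in> X"
  then have a: "(z,x) \<in> (Bs l S)\<^sup>*" and b: "(z,y) \<in> (Bs l S)\<^sup>*" by auto
  from Bs_sym[OF a] b show "(x,y) \<in> (Bs l S)\<^sup>*" by (rule rtrancl_trans)
qed

lemma cls_resp: "(x,y) \<in> Bs l S \<Longrightarrow> X \<in> cls l S \<Longrightarrow> x \<in> X \<Longrightarrow> y \<in> X"
  unfolding cls_def by (erule quotientE) (auto intro: rtrancl_into_rtrancl)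

lemma cls_disj: "X \<in> cls l S \<Longrightarrow> Y \<in> cls l S \<Longrightarrow> x \<in> X \<Longrightarrow> x \<in> Y \<Longrightarrow> X = Y"
proof -
  have *: "Z = (Bs l S)\<^sup>*``{x}" if "Z \<in> cls l S" "x \<in> Z" for Z
  proof
    show "Z \<subseteq> (Bs l S)\<^sup>*``{x}"
    proof
      fix y assume "y \<in> Z"
      then have "(x,y) \<in> (Bs l S)\<^sup>*" using cls_conn that by blast
      then show "y \<in> (Bs l S)\<^sup>*``{x}" by simp
    qed
    show "(Bs l S)\<^sup>*``{x} \<subseteq> Z"
    proof
      fix y assume "y \<in> (Bs l S)\<^sup>*``{x}"
      then have xy: "(x,y) \<in> (Bs l S)\<^sup>*" by simp
      from that show "y \<in> Z" unfolding cls_def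
      proof (elim quotientE)
        fix z assume Z: "Z = (Bs l S)\<^sup>* `` {z}" "x \<in> Z"
        then have "(z,x) \<in> (Bs l S)\<^sup>*" by simp
        from rtrancl_trans[OF this xy] show "y \<in> Z" using Z by simp
      qed
    qed
  qed
  assume "X \<in> cls l S" "Y \<in> cls l S" "x \<in> X" "x \<in> Y"
  then show ?thesis using * by metis
qed

lemma cls_finite: "finite S \<Longrightarrow> finite (cls l S)"
  by (rule finite_subset[of _ "Pow S"]) (use cls_sub in auto)

lemma Bs_mono: "S \<subseteq> S' \<Longrightarrow> (x,y) \<in> (Bs l S)\<^sup>* \<Longrightarrow> (x,y) \<in> (Bs l S')\<^sup>*"
  by (rule rtrancl_mono[THEN subsetD, of "Bs l S"]) (auto simp: Bs_def)

lemma cls_new: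
  assumes "\<And>x. x \<in> S \<Longrightarrow> x + l \<le> p" "0 < l"
  shows "cls l (insert p S) = insert {p} (cls l S)"
proof -
  have pO: "p \<notin> S" using assms by force
  show ?thesis unfolding cls_def[of l "insert p S"]
  proof (rule quot_char)
    fix X assume "X \<in> insert {p} (cls l S)" then show "X \<subseteq> insert p S" using cls_sub by auto
  next
    fix X assume "X \<in> insert {p} (cls l S)" then show "X \<noteq> {}" using cls_ne by auto
  next
    fix x assume xs: "x \<in> insert p S"
    show "\<exists>X\<in>insert {p} (cls l S). x \<in> X"
    proof (cases "x = p")
      case True then show ?thesis by blast
    next
      case False
      then have "x \<in> S" using xs by simp
      from cls_cover[OF this, of l] show ?thesis by blast
    qed
  next
    fix X x y assume "X \<in> insert {p} (cls l S)" "x \<in> X" "y \<in> X"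
    then show "(x,y) \<in> (Bs l (insert p S))\<^sup>*" using cls_conn Bs_mono[of S "insert p S"] by blast
  next
    fix x y X assume e: "(x,y) \<in> Bs l (insert p S)" and X: "X \<in> insert {p} (cls l S)" and x: "x \<in> X"
    show "y \<in> X"
    proof (cases "x = p \<or> y = p")
      case True
      have xy: "x \<in> insert p S" "y \<in> insert p S" "x < y + l" "y < x + l" using e by (auto simp: Bs_def)
      have "x = p"
      proof (rule ccontr)
        assume "x \<noteq> p"
        then have "y = p" "x \<in> S" using True xy by auto
        then show False using assms(1)[of x] xy by linarith
      qed
      moreover have "y = p"
      proof (rule ccontr)
        assume "y \<noteq> p"
        then have "x = p" "y \<in> S" using True xy by auto
        then show False using assms(1)[of y] xy by linarith
      qed
      ultimately have "x = p" "y = p" by auto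
      then show ?thesis using x by simp
    next
      case False
      then have "(x,y) \<in> Bs l S" using e by (auto simp: Bs_def)
      moreover have "X \<in> cls l S" using X x False by auto
      ultimately show ?thesis using cls_resp x by blast
    qed
  qed
qed

lemma cls_ext:
  assumes "q \<in> S" "\<And>x. x \<in> S \<Longrightarrow> x \<le> q" "q < p" "p < q + l"
  defines "C \<equiv> (Bs l S)\<^sup>*``{q}"
  shows "cls l (insert p S) = insert (insert p C) (cls l S - {C})"
proof -
  have pS: "p \<notin> S" using assms(2) assms(3) by force
  have C: "C \<in> cls l S" "q \<in> C" using cls_cover[OF assms(1)] C_def by auto
  have CS: "C \<subseteq> S" using cls_sub[OF C(1)] .
  have ov: "y \<in> C" if "y \<in> S" "p < y + l" for y
  proof -
    have "y \<le> q" using assms(2) that(1) .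
    then have "(q,y) \<in> Bs l S" using that assms(1,3,4) unfolding Bs_def by simp
    then show ?thesis using C cls_resp by blast
  qed
  have mono: "(a,b) \<in> (Bs l (insert p S))\<^sup>*" if "(a,b) \<in> (Bs l S)\<^sup>*" for a b
    using Bs_mono[of S "insert p S" a b l] that by blast
  show ?thesis unfolding cls_def[of l "insert p S"]
  proof (rule quot_char)
    fix X assume X: "X \<in> insert (insert p C) (cls l S - {C})"
    show "X \<subseteq> insert p S"
    proof (cases "X = insert p C")
      case True then show ?thesis using CS by blast
    next
      case False then have "X \<in> cls l S" using X by simp
      then show ?thesis using cls_sub by blast
    qed
  next
    fix X assume X: "X \<in> insert (insert p C) (cls l S - {C})"
    show "X \<noteq> {}"
    proof (cases "X = insert p C")
      case True then show ?thesis by blast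
    next
      case False then have "X \<in> cls l S" using X by simp
      then show ?thesis using cls_ne by blast
    qed
  next
    fix x assume xs: "x \<in> insert p S"
    show "\<exists>X\<in>insert (insert p C) (cls l S - {C}). x \<in> X"
    proof (cases "x = p")
      case True
      have "insert p C \<in> insert (insert p C) (cls l S - {C})" by (rule insertI1)
      moreover have "x \<in> insert p C" using True by (rule ssubst) (rule insertI1)
      ultimately show ?thesis by (rule bexI[rotated])
    next
      case False
      then have xS: "x \<in> S" using xs by simp
      define Y where "Y = (Bs l S)\<^sup>*``{x}"
      have Y1: "Y \<in> cls l S" using cls_cover[OF xS, of l] unfolding Y_def by (rule conjunct1)
      have Y2: "x \<in> Y" using cls_cover[OF xS, of l] unfolding Y_def by (rule conjunct2)
      show ?thesis
      proof (cases "Y = C")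
        case True
        then have "x \<in> insert p C" using Y2 by simp
        then show ?thesis by (rule bexI[of _ "insert p C"]) (rule insertI1)
      next
        case False
        then have "Y \<in> insert (insert p C) (cls l S - {C})" using Y1 by simp
        then show ?thesis using Y2 by (rule bexI[rotated])
      qed
    qed
  next
    fix X x y assume X: "X \<in> insert (insert p C) (cls l S - {C})" and xy: "x \<in> X" "y \<in> X"
    have pq: "(p,q) \<in> (Bs l (insert p S))\<^sup>*"
    proof -
      have "(p,q) \<in> Bs l (insert p S)" using assms(1,3,4) unfolding Bs_def by simp
      then show ?thesis by (rule r_into_rtrancl)
    qed
    have qp: "(q,p) \<in> (Bs l (insert p S))\<^sup>*"
    proof -
      have "(q,p) \<in> Bs l (insert p S)" using assms(1,3,4) unfolding Bs_def by simp
      then show ?thesis by (rule r_into_rtrancl)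
    qed
    have cc: "(a,b) \<in> (Bs l (insert p S))\<^sup>*" if "a \<in> C" "b \<in> C" for a b
      using cls_conn[OF C(1) that] mono by blast
    have toq: "(a,q) \<in> (Bs l (insert p S))\<^sup>*" if "a \<in> insert p C" for a
      using that cc[OF _ C(2)] pq by blast
    have fromq: "(q,a) \<in> (Bs l (insert p S))\<^sup>*" if "a \<in> insert p C" for a
      using that cc[OF C(2)] qp by blast
    show "(x,y) \<in> (Bs l (insert p S))\<^sup>*"
    proof (cases "X = insert p C")
      case True
      then show ?thesis using toq[of x] fromq[of y] xy rtrancl_trans by metis
    next
      case False
      then have "X \<in> cls l S" using X by simp
      then show ?thesis using cls_conn xy mono by blast
    qed
  next
    fix x y X assume e: "(x,y) \<in> Bs l (insert p S)" and X: "X \<in> insert (insert p C) (cls l S - {C})"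
      and x: "x \<in> X"
    have exy: "x \<in> insert p S" "y \<in> insert p S" "x < y + l" "y < x + l" using e unfolding Bs_def by auto
    have Xo: "X = insert p C \<or> (X \<in> cls l S \<and> X \<noteq> C)" using X by blast
    show "y \<in> X"
    proof (cases "x = p")
      case xp: True
      then have XC: "X = insert p C" using Xo x cls_sub pS by blast
      show ?thesis
      proof (cases "y = p")
        case True then show ?thesis using XC by simp
      next
        case False
        then have "y \<in> S" using exy by simp
        then have "y \<in> C" using ov exy xp by simp
        then show ?thesis using XC by simp
      qed
    next
      case xnp: False
      then have xS: "x \<in> S" using exy by simp
      show ?thesis
      proof (cases "y = p")
        case True
        then have "x \<in> C" using ov xS exy by simp
        then have "X = insert p C" using Xo x cls_disj C(1) by blast
        then show ?thesis using True by simp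
      next
        case False
        then have e': "(x,y) \<in> Bs l S" using exy xS unfolding Bs_def by simp
        show ?thesis
        proof (cases "X = insert p C")
          case True
          then have "x \<in> C" using x xnp by simp
          then show ?thesis using cls_resp[OF e' C(1)] True by simp
        next
          case False
          then have "X \<in> cls l S" using Xo by simp
          then show ?thesis using x cls_resp[OF e'] by blast
        qed
      qed
    qed
  qed
qed

lemma occ_iff: "j \<in> occs w t \<longleftrightarrow> (\<exists>x y. t = x @ w @ y \<and> length x = j)"
proof
  assume "j \<in> occs w t"
  then have j: "j + length w \<le> length t" "take (length w) (drop j t) = w" unfolding occs_def by auto
  have "t = take j t @ take (length w) (drop j t) @ drop (length w) (drop j t)" by (simp only: append_take_drop_id)
  then have "t = take j t @ w @ drop (length w) (drop j t)" using j(2) by simp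
  moreover have "length (take j t) = j" using j(1) by simp
  ultimately show "\<exists>x y. t = x @ w @ y \<and> length x = j" by blast
next
  assume "\<exists>x y. t = x @ w @ y \<and> length x = j"
  then obtain x y where "t = x @ w @ y" "length x = j" by blast
  then show "j \<in> occs w t" unfolding occs_def by simp
qed

lemma occs_bound: "j \<in> occs w t \<Longrightarrow> j + length w \<le> length t"
  unfolding occs_def by simp

lemma occs_finite: "finite (occs w t)"
  by (rule finite_subset[of _ "{..length t}"]) (auto simp: occs_def)

lemma clumps_eq: "clumps w t = cls (length w) (occs w t)"
  unfolding clumps_def clump_rel_def overlap_def cls_def Bs_def by simp

lemma occs_prefix: "j \<in> occs w s \<Longrightarrow> j \<in> occs w (s @ m)"
  unfolding occ_iff by (metis append.assoc)

lemma occs_prefix_back: "j \<in> occs w (s @ m) \<Longrightarrow> j + length w \<le> length s \<Longrightarrow> j \<in> occs w s"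
  unfolding occs_def by (simp add: drop_append take_append)

lemma late_occ:
  assumes "s = x0 @ w" "j \<in> occs w (s @ m)" "length s < j + length w"
  shows "\<exists>x' y. w @ m = x' @ w @ y \<and> x' \<noteq> [] \<and> length x' = j - length x0"
proof -
  obtain x y where xy: "s @ m = x @ w @ y" "length x = j" using assms(2) occ_iff by blast
  have lx: "length x0 < j" using assms(1,3) xy by simp
  have "w @ m = drop (length x0) (s @ m)" using assms(1) by simp
  also have "\<dots> = drop (length x0) x @ w @ y" using xy lx by simp
  finally show ?thesis using lx xy by (intro exI[of _ "drop (length x0) x"] exI[of _ y]) auto
qed

definition Ew :: "'a list \<Rightarrow> 'a list set" where
  "Ew w = {s. \<exists>x. s = x @ w}"

lemma Ew_last: "s \<in> Ew w \<Longrightarrow> length s - length w \<in> occs w s"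
  unfolding Ew_def occ_iff by auto (metis append_Nil2 diff_add_inverse2 length_append)

lemma Ew_len: "s \<in> Ew w \<Longrightarrow> length w \<le> length s"
  unfolding Ew_def by auto

lemma occs_le: "j \<in> occs w s \<Longrightarrow> j \<le> length s - length w"
  using occs_bound by fastforce

lemma occs_app_M:
  assumes s: "s \<in> Ew w" and m: "m \<in> Mlang w"
  shows "occs w (s @ m) = insert (length (s @ m) - length w) (occs w s)"
proof
  obtain x0 where x0: "s = x0 @ w" using s Ew_def by blast
  show "occs w (s @ m) \<subseteq> insert (length (s @ m) - length w) (occs w s)"
  proof
    fix j assume j: "j \<in> occs w (s @ m)"
    show "j \<in> insert (length (s @ m) - length w) (occs w s)"
    proof (cases "j + length w \<le> length s")
      case True then show ?thesis using occs_prefix_back j by blast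
    next
      case False
      then obtain x' y where xy: "w @ m = x' @ w @ y" "x' \<noteq> []" "length x' = j - length x0"
        using late_occ[OF x0 j] by auto
      have "y = []" using m xy unfolding Mlang_def by blast
      then have "length m = length x'" using arg_cong[OF xy(1), of length] by simp
      moreover have "length x' > 0" using xy(2) by simp
      ultimately have "j = length (s @ m) - length w" using xy(3) x0 by simp
      
      then show ?thesis by simp
    qed
  qed
  show "insert (length (s @ m) - length w) (occs w s) \<subseteq> occs w (s @ m)"
  proof -
    obtain x' where "w @ m = x' @ w" using m unfolding Mlang_def by blast
    then have "s @ m = (x0 @ x') @ w @ []" using x0 by simp
    then have "length (s @ m) - length w \<in> occs w (s @ m)" unfolding occ_iff
      by (metis add_diff_cancel_right' append_Nil2 length_append)
    then show ?thesis using occs_prefix by blast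
  qed
qed


lemma occs_app_U:
  assumes s: "s \<in> Ew w" and u: "u \<in> Ulang w"
  shows "occs w (s @ u) = occs w s"
proof
  obtain x0 where x0: "s = x0 @ w" using s Ew_def by blast
  show "occs w (s @ u) \<subseteq> occs w s"
  proof
    fix j assume j: "j \<in> occs w (s @ u)"
    show "j \<in> occs w s"
    proof (cases "j + length w \<le> length s")
      case True then show ?thesis using occs_prefix_back j by blast
    next
      case False
      then obtain x' y where xy: "w @ u = x' @ w @ y" "x' \<noteq> []"
        using late_occ[OF x0 j] by auto
      then show ?thesis using u unfolding Ulang_def by blast
    qed
  qed
  show "occs w s \<subseteq> occs w (s @ u)" using occs_prefix by blast
qed

lemma R_props:
  assumes "r \<in> Rlang w"
  shows "r \<in> Ew w" "occs w r = {length r - length w}"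
proof -
  show E: "r \<in> Ew w" using assms unfolding Rlang_def Ew_def by blast
  show "occs w r = {length r - length w}"
  proof
    show "occs w r \<subseteq> {length r - length w}"
    proof
      fix j assume "j \<in> occs w r"
      then obtain x y where xy: "r = x @ w @ y" "length x = j" using occ_iff by blast
      then have "y = []" using assms unfolding Rlang_def by blast
      then show "j \<in> {length r - length w}" using xy by simp
    qed
    show "{length r - length w} \<subseteq> occs w r" using Ew_last[OF E] by simp
  qed
qed

lemma R_intro:
  assumes "s \<in> Ew w" "occs w s \<subseteq> {length s - length w}"
  shows "s \<in> Rlang w"
proof -
  have "\<not> (\<exists>x y. s = x @ w @ y \<and> y \<noteq> [])"
  proof
    assume "\<exists>x y. s = x @ w @ y \<and> y \<noteq> []"
    then obtain x y where xy: "s = x @ w @ y" "y \<noteq> []" by blast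
    then have "length x \<in> occs w s" using occ_iff by blast
    then have "length x = length s - length w" using assms(2) by blast
    then show False using xy by simp
  qed
  then show ?thesis using assms(1) unfolding Rlang_def Ew_def by blast
qed

lemma N_iff: "t \<in> Nlang w \<longleftrightarrow> occs w t = {}"
  unfolding Nlang_def using occ_iff by blast

lemma dec_E:
  assumes s: "s \<in> Ew w" and nR: "s \<notin> Rlang w"
  shows "\<exists>s' m. s = s' @ m \<and> s' \<in> Ew w \<and> m \<in> Mlang w"
proof -
  define O' where "O' = occs w s - {length s - length w}"
  have "O' \<noteq> {}" using R_intro[OF s] nR unfolding O'_def by blast
  moreover have "finite O'" unfolding O'_def using occs_finite by blast
  ultimately have jO: "Max O' \<in> O'" and jmax: "\<And>i. i \<in> O' \<Longrightarrow> i \<le> Max O'" by auto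
  define j where "j = Max O'"
  have jocc: "j \<in> occs w s" and jne: "j \<noteq> length s - length w" using jO unfolding O'_def j_def by auto
  obtain x y where xy: "s = x @ w @ y" "length x = j" using jocc occ_iff by blast
  obtain x0 where x0: "s = x0 @ w" using s Ew_def by blast
  have jle: "j \<le> length x0" using occs_le[OF jocc] x0 by simp
  have yne: "y \<noteq> []" using xy jne by auto
  have wy: "w @ y = drop j x0 @ w"
  proof -
    have "w @ y = drop j s" using xy by simp
    also have "\<dots> = drop j x0 @ w" using x0 jle by simp
    finally show ?thesis .
  qed
  have noint: "\<not> (\<exists>x' y'. w @ y = x' @ w @ y' \<and> x' \<noteq> [] \<and> y' \<noteq> [])"
  proof
    assume "\<exists>x' y'. w @ y = x' @ w @ y' \<and> x' \<noteq> [] \<and> y' \<noteq> []"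
    then obtain x' y' where e: "w @ y = x' @ w @ y'" "x' \<noteq> []" "y' \<noteq> []" by blast
    have "s = (x @ x') @ w @ y'" using xy e by simp
    then have i: "length (x @ x') \<in> occs w s" using occ_iff by blast
    have "length (x @ x') \<noteq> length s - length w" using \<open>s = (x @ x') @ w @ y'\<close> e(3) by simp
    then have "length (x @ x') \<in> O'" using i unfolding O'_def by simp
    then have "length (x @ x') \<le> j" using jmax j_def by simp
    then show False using xy e(2) by simp
  qed
  have "y \<in> Mlang w" unfolding Mlang_def using yne wy noint by blast
  moreover have "x @ w \<in> Ew w" unfolding Ew_def by blast
  ultimately show ?thesis using xy by (intro exI[of _ "x @ w"] exI[of _ y]) simp
qed

lemma dec_T:
  assumes t: "t \<notin> Nlang w"
  shows "\<exists>s u. t = s @ u \<and> s \<in> Ew w \<and> u \<in> Ulang w"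
proof -
  have "occs w t \<noteq> {}" using t N_iff by blast
  moreover have "finite (occs w t)" using occs_finite by blast
  ultimately have jO: "Max (occs w t) \<in> occs w t" and jmax: "\<And>i. i \<in> occs w t \<Longrightarrow> i \<le> Max (occs w t)" by auto
  define j where "j = Max (occs w t)"
  obtain x y where xy: "t = x @ w @ y" "length x = j" using jO occ_iff j_def by blast
  have noint: "\<not> (\<exists>x' y'. w @ y = x' @ w @ y' \<and> x' \<noteq> [])"
  proof
    assume "\<exists>x' y'. w @ y = x' @ w @ y' \<and> x' \<noteq> []"
    then obtain x' y' where e: "w @ y = x' @ w @ y'" "x' \<noteq> []" by blast
    have "t = (x @ x') @ w @ y'" using xy e by simp
    then have i: "length (x @ x') \<in> occs w t" using occ_iff by blast
    then have "length (x @ x') \<le> j" using jmax j_def by simp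
    then show False using xy e(2) by simp
  qed
  have "y \<in> Ulang w" unfolding Ulang_def using noint by blast
  moreover have "x @ w \<in> Ew w" unfolding Ew_def by blast
  ultimately show ?thesis using xy by (intro exI[of _ "x @ w"] exI[of _ y]) simp
qed

lemma Ew_Max: "s \<in> Ew w \<Longrightarrow> Max (occs w s) = length s - length w"
proof -
  assume s: "s \<in> Ew w"
  show ?thesis
  proof (rule Max_eqI)
    show "finite (occs w s)" by (rule occs_finite)
    show "length s - length w \<in> occs w s" by (rule Ew_last[OF s])
    show "\<And>y. y \<in> occs w s \<Longrightarrow> y \<le> length s - length w" by (rule occs_le)
  qed
qed

lemma eq_by_len: "s1 @ m1 = s2 @ m2 \<Longrightarrow> length s1 = length s2 \<Longrightarrow> s1 = s2 \<and> m1 = m2"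
  by (simp add: append_eq_append_conv)

lemma M_ne: "m \<in> Mlang w \<Longrightarrow> m \<noteq> []"
  unfolding Mlang_def by blast

lemma M_new_notin:
  assumes s: "s \<in> Ew w" and m: "m \<in> Mlang w"
  shows "length (s @ m) - length w \<notin> occs w s"
proof
  assume "length (s @ m) - length w \<in> occs w s"
  then have "length (s @ m) - length w \<le> length s - length w" by (rule occs_le)
  moreover have "length m > 0" using M_ne[OF m] by simp
  moreover have "length w \<le> length s" using Ew_len[OF s] .
  ultimately show False by (simp only: length_append)
qed

lemma occs_app_M_diff:
  assumes s: "s \<in> Ew w" and m: "m \<in> Mlang w"
  shows "occs w (s @ m) - {length (s @ m) - length w} = occs w s"
  using occs_app_M[OF s m] M_new_notin[OF s m] by simp

lemma inj_EM: "inj_on (\<lambda>(s,m). s @ m) (Ew w \<times> Mlang w)"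
proof (rule inj_onI, clarify)
  fix s1 m1 s2 m2 assume a: "s1 \<in> Ew w" "m1 \<in> Mlang w" "s2 \<in> Ew w" "m2 \<in> Mlang w" "s1 @ m1 = s2 @ m2"
  define t where "t = s1 @ m1"
  have "occs w t - {length t - length w} = occs w s1"
    using occs_app_M_diff[OF a(1,2)] unfolding t_def .
  moreover have "occs w t - {length t - length w} = occs w s2"
    using occs_app_M_diff[OF a(3,4)] unfolding t_def a(5) .
  ultimately have "Max (occs w s1) = Max (occs w s2)" by simp
  then have "length s1 = length s2" using Ew_Max[OF a(1)] Ew_Max[OF a(3)] Ew_len[OF a(1)] Ew_len[OF a(3)] by simp
  then show "s1 = s2 \<and> m1 = m2" using eq_by_len a(5) by blast
qed

lemma inj_EU: "inj_on (\<lambda>(s,u). s @ u) (Ew w \<times> Ulang w)"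
proof (rule inj_onI, clarify)
  fix s1 m1 s2 m2 assume a: "s1 \<in> Ew w" "m1 \<in> Ulang w" "s2 \<in> Ew w" "m2 \<in> Ulang w" "s1 @ m1 = s2 @ m2"
  have "occs w s1 = occs w s2" using occs_app_U[OF a(1,2)] occs_app_U[OF a(3,4)] a(5) by simp
  then have "Max (occs w s1) = Max (occs w s2)" by simp
  then have "length s1 = length s2" using Ew_Max[OF a(1)] Ew_Max[OF a(3)] Ew_len[OF a(1)] Ew_len[OF a(3)] by simp
  then show "s1 = s2 \<and> m1 = m2" using eq_by_len a(5) by blast
qed

lemma K_sub_M: "Klang w \<subseteq> Mlang w"
proof
  fix e assume e: "e \<in> Klang w"
  then have e0: "e \<noteq> []" "length e < length w" and "\<exists>e'. e' \<noteq> [] \<and> w @ e = e' @ w"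
    unfolding Klang_def autocorr0_def autocorr_def by auto
  then obtain e' where e': "w @ e = e' @ w" by blast
  have noext: "\<not> (\<exists>c\<in>autocorr0 w. \<exists>u. u \<noteq> [] \<and> e = c @ u)" using e unfolding Klang_def by blast
  have "\<not> (\<exists>x y. w @ e = x @ w @ y \<and> x \<noteq> [] \<and> y \<noteq> [])"
  proof
    assume "\<exists>x y. w @ e = x @ w @ y \<and> x \<noteq> [] \<and> y \<noteq> []"
    then obtain x y where xy: "w @ e = x @ w @ y" "x \<noteq> []" "y \<noteq> []" by blast
    have lx: "length x < length e" using arg_cong[OF xy(1), of length] xy(3) by simp
    define c where "c = take (length x) e"
    have wc: "w @ c = x @ w"
    proof -
      have "w @ c = take (length w + length x) (w @ e)" unfolding c_def by simp
      also have "\<dots> = x @ w" using xy(1) by simp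
      finally show ?thesis .
    qed
    have "c \<in> autocorr0 w" unfolding autocorr0_def autocorr_def
      using wc xy(2) lx e0 unfolding c_def by auto
    moreover have "e = c @ drop (length x) e" "drop (length x) e \<noteq> []" unfolding c_def using lx by auto
    ultimately show False using noext by blast
  qed
  then show "e \<in> Mlang w" unfolding Mlang_def using e0 e' by blast
qed

lemma K_len: "e \<in> Klang w \<Longrightarrow> length e < length w"
  unfolding Klang_def autocorr0_def autocorr_def by auto

lemma M_short_K: "m \<in> Mlang w \<Longrightarrow> length m < length w \<Longrightarrow> m \<in> Klang w"
proof -
  assume m: "m \<in> Mlang w" and lm: "length m < length w"
  obtain x where x: "w @ m = x @ w" using m unfolding Mlang_def by blast
  have mne: "m \<noteq> []" using M_ne[OF m] .
  have "x \<noteq> []" using x mne by auto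
  then have ac: "m \<in> autocorr0 w" unfolding autocorr0_def autocorr_def using x mne lm by auto
  have "\<not> (\<exists>c\<in>autocorr0 w. \<exists>u. u \<noteq> [] \<and> m = c @ u)"
  proof
    assume "\<exists>c\<in>autocorr0 w. \<exists>u. u \<noteq> [] \<and> m = c @ u"
    then obtain c u where c: "c \<in> autocorr0 w" "u \<noteq> []" "m = c @ u" by blast
    then obtain c' where c': "c' \<noteq> []" "w @ c = c' @ w" unfolding autocorr0_def autocorr_def by auto
    have "w @ m = c' @ w @ u" using c(3) c'(2) by simp
    then show False using m c'(1) c(2) unfolding Mlang_def by blast
  qed
  then show ?thesis using ac unfolding Klang_def by blast
qed

definition nk :: "nat \<Rightarrow> nat set set \<Rightarrow> nat" where
  "nk k P = card {c \<in> P. card c = k}"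

lemma num_nk: "num_kclumps k w t = nk k (cls (length w) (occs w t))"
  unfolding num_kclumps_def nk_def clumps_eq ..

lemma nk_insert:
  assumes "finite P" "X \<notin> P"
  shows "nk k (insert X P) = nk k P + (if card X = k then 1 else 0)"
proof (cases "card X = k")
  case True
  then have "{c \<in> insert X P. card c = k} = insert X {c \<in> P. card c = k}" by auto
  moreover have "card (insert X {c \<in> P. card c = k}) = card {c \<in> P. card c = k} + 1"
    using assms by simp
  ultimately show ?thesis unfolding nk_def using True by simp
next
  case False
  then have "{c \<in> insert X P. card c = k} = {c \<in> P. card c = k}" by auto
  then show ?thesis unfolding nk_def using False by simp
qed

lemma nk_remove:
  assumes "finite P" "X \<in> P"
  shows "nk k P = nk k (P - {X}) + (if card X = k then 1 else 0)"
proof -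
  have "P = insert X (P - {X})" using assms(2) by blast
  then have "nk k P = nk k (insert X (P - {X}))" by simp
  also have "\<dots> = nk k (P - {X}) + (if card X = k then 1 else 0)"
    by (rule nk_insert) (use assms in auto)
  finally show ?thesis .
qed

definition lastc :: "'a list \<Rightarrow> 'a list \<Rightarrow> nat set" where
  "lastc w s = (Bs (length w) (occs w s))\<^sup>*``{length s - length w}"

definition lc :: "'a list \<Rightarrow> 'a list \<Rightarrow> nat" where
  "lc w s = card (lastc w s)"

definition pend :: "nat \<Rightarrow> 'a list \<Rightarrow> 'a list \<Rightarrow> nat" where
  "pend k w s = nk k (cls (length w) (occs w s) - {lastc w s})"

lemma lastc_in: "s \<in> Ew w \<Longrightarrow> lastc w s \<in> cls (length w) (occs w s) \<and> length s - length w \<in> lastc w s"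
  unfolding lastc_def using cls_cover[OF Ew_last] by blast

lemma numk_pend: "s \<in> Ew w \<Longrightarrow> num_kclumps k w s = pend k w s + (if lc w s = k then 1 else 0)"
  unfolding num_nk pend_def lc_def
  by (rule nk_remove[OF cls_finite[OF occs_finite] conjunct1[OF lastc_in]])

lemma lc_bounds:
  assumes "s \<in> Ew w" "0 < length w"
  shows "1 \<le> lc w s \<and> lc w s \<le> length s"
proof -
  have sub: "lastc w s \<subseteq> {..<length s}"
  proof
    fix j assume "j \<in> lastc w s"
    then have "j \<in> occs w s" using lastc_in[OF assms(1)] cls_sub by blast
    then have "j + length w \<le> length s" by (rule occs_bound)
    then have "j < length s" using assms(2) by linarith
    then show "j \<in> {..<length s}" by simp
  qed
  then have "card (lastc w s) \<le> card {..<length s}" by (intro card_mono) auto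
  then have "card (lastc w s) \<le> length s" by simp
  moreover have "lastc w s \<noteq> {}" using lastc_in[OF assms(1)] by blast
  moreover have "finite (lastc w s)" using sub finite_subset by blast
  ultimately show ?thesis unfolding lc_def by (simp add: Suc_le_eq card_gt_0_iff)
qed

lemma cls_empty: "cls l {} = {}"
  unfolding cls_def quotient_def by simp

lemma lastc_unique:
  assumes "s \<in> Ew w" "X \<in> cls (length w) (occs w s)" "length s - length w \<in> X"
  shows "lastc w s = X"
  using cls_disj[OF conjunct1[OF lastc_in[OF assms(1)]] assms(2) conjunct2[OF lastc_in[OF assms(1)]] assms(3)] .

lemma E_app_M: "s \<in> Ew w \<Longrightarrow> m \<in> Mlang w \<Longrightarrow> s @ m \<in> Ew w"
proof -
  assume s: "s \<in> Ew w" and m: "m \<in> Mlang w"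
  obtain x where x: "s = x @ w" using s unfolding Ew_def by blast
  obtain x' where x': "w @ m = x' @ w" using m unfolding Mlang_def by blast
  have "s @ m = (x @ x') @ w" using x x' by simp
  then show ?thesis unfolding Ew_def by blast
qed

lemma R_stats:
  assumes r: "r \<in> Rlang w" and l: "0 < length w"
  shows "lc w r = 1" "pend k w r = 0"
proof -
  define q where "q = length r - length w"
  have E: "r \<in> Ew w" and o: "occs w r = {q}" using R_props[OF r] q_def by auto
  have c: "cls (length w) (occs w r) = {{q}}"
    using cls_new[of "{}" "length w" q] l o cls_empty by simp
  have lq: "lastc w r = {q}" using lastc_unique[OF E, of "{q}"] c q_def by simp
  show "lc w r = 1" unfolding lc_def lq by simp
  show "pend k w r = 0" unfolding pend_def c lq nk_def by simp
qed

lemma far_stats: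
  assumes s: "s \<in> Ew w" and m: "m \<in> Mlang w" and lm: "length w \<le> length m" and l: "0 < length w"
  shows "lc w (s @ m) = 1" "pend k w (s @ m) = num_kclumps k w s"
proof -
  define p where "p = length (s @ m) - length w"
  have o: "occs w (s @ m) = insert p (occs w s)" using occs_app_M[OF s m] p_def by simp
  have far: "x + length w \<le> p" if "x \<in> occs w s" for x
  proof -
    have "x + length w \<le> length s" using occs_bound[OF that] .
    then show ?thesis using lm unfolding p_def by simp
  qed
  have c: "cls (length w) (occs w (s @ m)) = insert {p} (cls (length w) (occs w s))"
    unfolding o by (rule cls_new[OF far l])
  have E2: "s @ m \<in> Ew w" by (rule E_app_M[OF s m])
  have lq: "lastc w (s @ m) = {p}" using lastc_unique[OF E2, of "{p}"] c p_def by simp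
  show "lc w (s @ m) = 1" unfolding lc_def lq by simp
  have pn: "p \<notin> occs w s" using M_new_notin[OF s m] p_def by simp
  have "{p} \<notin> cls (length w) (occs w s)" using cls_sub pn by blast
  then have "cls (length w) (occs w (s @ m)) - {lastc w (s @ m)} = cls (length w) (occs w s)"
    unfolding c lq by simp
  then show "pend k w (s @ m) = num_kclumps k w s" unfolding pend_def num_nk by simp
qed

lemma near_stats:
  assumes s: "s \<in> Ew w" and m: "m \<in> Mlang w" and lm: "length m < length w"
  shows "lc w (s @ m) = lc w s + 1" "pend k w (s @ m) = pend k w s"
proof -
  define p where "p = length (s @ m) - length w"
  define q where "q = length s - length w"
  have o: "occs w (s @ m) = insert p (occs w s)" using occs_app_M[OF s m] p_def by simp
  have qS: "q \<in> occs w s" using Ew_last[OF s] q_def by simp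
  have qmax: "\<And>x. x \<in> occs w s \<Longrightarrow> x \<le> q" using occs_le q_def by blast
  have ls: "length w \<le> length s" using Ew_len[OF s] .
  have mne: "0 < length m" using M_ne[OF m] by simp
  have qp: "q < p" using ls mne unfolding p_def q_def length_append by linarith
  have pq: "p < q + length w" using ls lm unfolding p_def q_def by simp
  define C where "C = lastc w s"
  have Cd: "C = (Bs (length w) (occs w s))\<^sup>*``{q}" unfolding C_def lastc_def q_def ..
  have c: "cls (length w) (occs w (s @ m)) = insert (insert p C) (cls (length w) (occs w s) - {C})"
    unfolding o Cd by (rule cls_ext[OF qS qmax qp pq])
  have E2: "s @ m \<in> Ew w" by (rule E_app_M[OF s m])
  have lq: "lastc w (s @ m) = insert p C" using lastc_unique[OF E2, of "insert p C"] c p_def by simp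
  have pn: "p \<notin> occs w s" using M_new_notin[OF s m] p_def by simp
  have CS: "C \<subseteq> occs w s" using lastc_in[OF s] cls_sub unfolding C_def by blast
  have Cf: "finite C" using CS occs_finite finite_subset by blast
  have "p \<notin> C" using pn CS by blast
  then show "lc w (s @ m) = lc w s + 1" unfolding lc_def lq C_def[symmetric] using Cf by simp
  have "insert p C \<notin> cls (length w) (occs w s)" using cls_sub pn by blast
  then have "cls (length w) (occs w (s @ m)) - {lastc w (s @ m)} = cls (length w) (occs w s) - {C}"
    unfolding c lq by auto
  then show "pend k w (s @ m) = pend k w s" unfolding pend_def C_def by simp
qed

lemma N_numk: "t \<in> Nlang w \<Longrightarrow> num_kclumps k w t = 0"
  unfolding num_nk using N_iff[of t w] cls_empty by (simp add: nk_def)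

lemma U_numk: "s \<in> Ew w \<Longrightarrow> u \<in> Ulang w \<Longrightarrow> num_kclumps k w (s @ u) = num_kclumps k w s"
  unfolding num_nk by (simp only: occs_app_U)

unbundle fps_syntax

definition wgf :: "('a::finite list \<Rightarrow> complex) \<Rightarrow> 'a list set \<Rightarrow> complex fps" where
  "wgf f L = Abs_fps (\<lambda>n. \<Sum>x\<in>{x\<in>L. length x = n}. f x)"

lemma fin_len: "finite {x::'a::finite list. x \<in> L \<and> length x = n}"
proof (rule finite_subset)
  show "{x. x \<in> L \<and> length x = n} \<subseteq> {xs. set xs \<subseteq> (UNIV::'a set) \<and> length xs = n}" by auto
  show "finite {xs. set xs \<subseteq> (UNIV::'a set) \<and> length xs = n}" by (rule finite_lists_length_eq) simp
qed

lemma wgf_nth: "wgf f L $ n = (\<Sum>x\<in>{x\<in>L. length x = n}. f x)"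
  unfolding wgf_def by simp

lemma lang_gf_wgf: "lang_gf p L = wgf (\<lambda>x. of_real (wprob p x)) L"
  unfolding lang_gf_def wgf_def by simp

lemma wgf_cong: "(\<And>x. x \<in> L \<Longrightarrow> f x = g x) \<Longrightarrow> wgf f L = wgf g L"
  unfolding wgf_def by (intro arg_cong[where f=Abs_fps] ext sum.cong) auto

lemma wgf_union:
  assumes "A \<inter> B = {}"
  shows "wgf f (A \<union> B) = wgf f A + wgf f B"
proof (rule fps_ext)
  fix n
  have "{x \<in> A \<union> B. length x = n} = {x \<in> A. length x = n} \<union> {x \<in> B. length x = n}" by auto
  then have "(\<Sum>x\<in>{x \<in> A \<union> B. length x = n}. f x) = (\<Sum>x\<in>{x \<in> A. length x = n}. f x) + (\<Sum>x\<in>{x \<in> B. length x = n}. f x)"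
    using sum.union_disjoint[OF fin_len fin_len, of A n B n f] assms by auto
  then show "wgf f (A \<union> B) $ n = (wgf f A + wgf f B) $ n" by (simp add: wgf_nth)
qed

lemma wgf_diff:
  assumes "B \<subseteq> A"
  shows "wgf f (A - B) = wgf f A - wgf f B"
proof -
  have "A = (A - B) \<union> B" using assms by blast
  then have "wgf f A = wgf f (A - B) + wgf f B" using wgf_union[of "A - B" B f] by force
  then show ?thesis by simp
qed

lemma wgf_mult:
  assumes inj: "inj_on (\<lambda>(x,y). x @ y) (A \<times> B)"
    and f: "\<And>x y. x \<in> A \<Longrightarrow> y \<in> B \<Longrightarrow> f (x @ y) = g x * h y"
  shows "wgf f ((\<lambda>(x,y). x @ y) ` (A \<times> B)) = wgf g A * wgf h B"
proof (rule fps_ext)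
  fix n
  define S where "S = {(x,y). x \<in> A \<and> y \<in> B \<and> length x + length y = n}"
  have S_eq: "S = (\<Union>i\<in>{0..n}. {x\<in>A. length x = i} \<times> {y\<in>B. length y = n - i})"
    unfolding S_def by auto
  have img: "{z \<in> (\<lambda>(x,y). x @ y) ` (A \<times> B). length z = n} = (\<lambda>(x,y). x @ y) ` S"
    unfolding S_def by force
  have injS: "inj_on (\<lambda>(x,y). x @ y) S" using inj by (rule inj_on_subset) (auto simp: S_def)
  have "wgf f ((\<lambda>(x,y). x @ y) ` (A \<times> B)) $ n = (\<Sum>z\<in>(\<lambda>(x,y). x @ y) ` S. f z)"
    unfolding wgf_nth img ..
  also have "\<dots> = (\<Sum>z\<in>S. f ((\<lambda>(x,y). x @ y) z))" by (rule sum.reindex[OF injS, unfolded comp_def])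
  also have "\<dots> = (\<Sum>z\<in>S. g (fst z) * h (snd z))"
    by (rule sum.cong) (auto simp: S_def f)
  also have "\<dots> = (\<Sum>i\<in>{0..n}. \<Sum>z\<in>{x\<in>A. length x = i} \<times> {y\<in>B. length y = n - i}. g (fst z) * h (snd z))"
    unfolding S_eq by (rule sum.UNION_disjoint) (auto simp: fin_len)
  also have "\<dots> = (\<Sum>i=0..n. (\<Sum>x\<in>{x\<in>A. length x = i}. g x) * (\<Sum>y\<in>{y\<in>B. length y = n - i}. h y))"
    by (simp add: sum_product sum.cartesian_product case_prod_beta)
  also have "\<dots> = (wgf g A * wgf h B) $ n" by (simp add: fps_mult_nth wgf_nth)
  finally show "wgf f ((\<lambda>(x,y). x @ y) ` (A \<times> B)) $ n = (wgf g A * wgf h B) $ n" .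
qed

lemma wprob_app: "wprob p (x @ y) = wprob p x * wprob p y"
  unfolding wprob_def by simp

unbundle fps_syntax

definition CW :: "('a \<Rightarrow> real) \<Rightarrow> nat \<Rightarrow> 'a list \<Rightarrow> complex \<Rightarrow> 'a list \<Rightarrow> complex" where
  "CW p k w v t = of_real (wprob p t) * v ^ num_kclumps k w t"

definition PW :: "('a \<Rightarrow> real) \<Rightarrow> nat \<Rightarrow> 'a list \<Rightarrow> complex \<Rightarrow> 'a list \<Rightarrow> complex" where
  "PW p k w v t = of_real (wprob p t) * v ^ pend k w t"

definition Ej :: "'a list \<Rightarrow> nat \<Rightarrow> 'a list set" where
  "Ej w j = {s \<in> Ew w. lc w s = j}"

lemma img_cat_E:
  assumes "t \<in> (\<lambda>(x,y). x @ y) ` (A \<times> B)"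
  obtains s u where "t = s @ u" "s \<in> A" "u \<in> B"
proof -
  obtain z where z: "z \<in> A \<times> B" "t = (\<lambda>(x,y). x @ y) z" using assms by (rule imageE) blast
  obtain s u where "z = (s,u)" by (cases z) blast
  then show ?thesis using z that by simp
qed

lemma img_cat_I: "s \<in> A \<Longrightarrow> u \<in> B \<Longrightarrow> s @ u \<in> (\<lambda>(x,y). x @ y) ` (A \<times> B)"
  by (rule image_eqI[of _ _ "(s,u)"]) auto

lemma L_T:
  fixes p :: "'a::finite \<Rightarrow> real"
  shows "Abs_fps (\<lambda>n. \<Sum>i. of_real (kclump_prob p w k n i) * v ^ i) = wgf (CW p k w v) UNIV"
proof (rule fps_ext)
  fix n
  define T where "T = {t::'a list. length t = n}"
  have fT: "finite T" using fin_len[of UNIV n] unfolding T_def by simp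
  define I where "I = num_kclumps k w ` T"
  have fI: "finite I" using fT I_def by simp
  have z: "of_real (kclump_prob p w k n i) * v ^ i = 0" if "i \<notin> I" for i
  proof -
    have "{t. length t = n \<and> num_kclumps k w t = i} = {}" using that unfolding I_def T_def by auto
    then show ?thesis unfolding kclump_prob_def by (simp only: sum.empty mult_zero_left of_real_0)
  qed
  have "(\<Sum>i. of_real (kclump_prob p w k n i) * v ^ i) = (\<Sum>i\<in>I. of_real (kclump_prob p w k n i) * v ^ i)"
    by (rule suminf_finite[OF fI z])
  also have "\<dots> = (\<Sum>i\<in>I. \<Sum>t\<in>{t\<in>T. num_kclumps k w t = i}. CW p k w v t)"
  proof (rule sum.cong[OF refl])
    fix i assume "i \<in> I"
    have "of_real (kclump_prob p w k n i) * v ^ i = (\<Sum>t\<in>{t\<in>T. num_kclumps k w t = i}. of_real (wprob p t)) * v ^ i"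
      unfolding kclump_prob_def T_def by simp
    also have "\<dots> = (\<Sum>t\<in>{t\<in>T. num_kclumps k w t = i}. CW p k w v t)"
      unfolding CW_def sum_distrib_right by (rule sum.cong) auto
    finally show "of_real (kclump_prob p w k n i) * v ^ i = (\<Sum>t\<in>{t\<in>T. num_kclumps k w t = i}. CW p k w v t)" .
  qed
  also have "\<dots> = (\<Sum>t\<in>T. CW p k w v t)" unfolding I_def by (rule sum.image_gen[OF fT, symmetric])
  also have "\<dots> = wgf (CW p k w v) UNIV $ n" unfolding wgf_nth T_def by simp
  finally show "Abs_fps (\<lambda>n. \<Sum>i. of_real (kclump_prob p w k n i) * v ^ i) $ n = wgf (CW p k w v) UNIV $ n"
    by simp
qed

lemma L_F4:
  fixes p :: "'a::finite \<Rightarrow> real"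
  shows "wgf (CW p k w v) UNIV = lang_gf p (Nlang w) + wgf (CW p k w v) (Ew w) * lang_gf p (Ulang w)"
proof -
  have U: "UNIV = Nlang w \<union> (\<lambda>(x,y). x @ y) ` (Ew w \<times> Ulang w)"
  proof (rule set_eqI)
    fix t :: "'a list"
    show "t \<in> UNIV \<longleftrightarrow> t \<in> Nlang w \<union> (\<lambda>(x,y). x @ y) ` (Ew w \<times> Ulang w)"
    proof (cases "t \<in> Nlang w")
      case False
      then obtain s u where "t = s @ u" "s \<in> Ew w" "u \<in> Ulang w" using dec_T by blast
      then have "t \<in> (\<lambda>(x,y). x @ y) ` (Ew w \<times> Ulang w)" using img_cat_I by blast
      then show ?thesis by simp
    qed simp
  qed
  have D: "Nlang w \<inter> (\<lambda>(x,y). x @ y) ` (Ew w \<times> Ulang w) = {}"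
  proof (rule equals0I)
    fix t assume "t \<in> Nlang w \<inter> (\<lambda>(x,y). x @ y) ` (Ew w \<times> Ulang w)"
    then have t0: "t \<in> Nlang w" "t \<in> (\<lambda>(x,y). x @ y) ` (Ew w \<times> Ulang w)" by simp_all
    obtain s u where t: "t = s @ u" "s \<in> Ew w" "u \<in> Ulang w" using img_cat_E[OF t0(2)] by blast
    have "occs w t \<noteq> {}" using occs_app_U[OF t(2,3)] Ew_last[OF t(2)] t(1) by auto
    then show False using N_iff t0(1) by blast
  qed
  have "wgf (CW p k w v) UNIV = wgf (CW p k w v) (Nlang w \<union> (\<lambda>(x,y). x @ y) ` (Ew w \<times> Ulang w))"
    using arg_cong[OF U, of "wgf (CW p k w v)"] .
  also have "\<dots> = wgf (CW p k w v) (Nlang w) + wgf (CW p k w v) ((\<lambda>(x,y). x @ y) ` (Ew w \<times> Ulang w))"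
    by (rule wgf_union[OF D])
  also have "wgf (CW p k w v) (Nlang w) = lang_gf p (Nlang w)"
    unfolding lang_gf_wgf by (rule wgf_cong) (simp add: CW_def N_numk)
  also have "wgf (CW p k w v) ((\<lambda>(x,y). x @ y) ` (Ew w \<times> Ulang w)) = wgf (CW p k w v) (Ew w) * lang_gf p (Ulang w)"
    unfolding lang_gf_wgf
  proof (rule wgf_mult[OF inj_EU])
    fix x y assume "x \<in> Ew w" "y \<in> Ulang w"
    then have "num_kclumps k w (x @ y) = num_kclumps k w x" by (rule U_numk)
    then show "CW p k w v (x @ y) = CW p k w v x * complex_of_real (wprob p y)"
      unfolding CW_def wprob_app by simp
  qed
  finally show ?thesis .
qed

lemma E_in_R_or_dec:
  assumes "s \<in> Ew w" "s \<notin> Rlang w"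
  obtains s' m where "s = s' @ m" "s' \<in> Ew w" "m \<in> Mlang w"
  using dec_E[OF assms] by blast

lemma R_not_dec:
  assumes "s \<in> Ew w" "m \<in> Mlang w"
  shows "s @ m \<notin> Rlang w"
proof
  assume r: "s @ m \<in> Rlang w"
  have "length s - length w \<in> occs w (s @ m)" using occs_prefix[OF Ew_last[OF assms(1)]] .
  then have "length s - length w = length (s @ m) - length w" using R_props(2)[OF r] by blast
  moreover have "length (s @ m) - length w \<in> occs w (s @ m)" using occs_app_M[OF assms] by blast
  ultimately have "length (s @ m) - length w \<in> occs w s"
    using Ew_last[OF assms(1)] by simp
  then show False using M_new_notin[OF assms] by blast
qed

lemma L_F2:
  fixes p :: "'a::finite \<Rightarrow> real"
  assumes l: "0 < length w"
  shows "wgf (PW p k w v) (Ej w 1) = lang_gf p (Rlang w)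
     + wgf (CW p k w v) (Ew w) * (lang_gf p (Mlang w) - lang_gf p (Klang w))"
proof -
  have MK: "m \<in> Mlang w - Klang w \<longleftrightarrow> m \<in> Mlang w \<and> length w \<le> length m" for m
  proof
    assume a: "m \<in> Mlang w - Klang w"
    then have "\<not> length m < length w" using M_short_K by blast
    then show "m \<in> Mlang w \<and> length w \<le> length m" using a by simp
  next
    assume a: "m \<in> Mlang w \<and> length w \<le> length m"
    then have "m \<notin> Klang w" using K_len by fastforce
    then show "m \<in> Mlang w - Klang w" using a by simp
  qed
  have eq: "Ej w 1 = Rlang w \<union> (\<lambda>(x,y). x @ y) ` (Ew w \<times> (Mlang w - Klang w))"
  proof
    show "Ej w 1 \<subseteq> Rlang w \<union> (\<lambda>(x,y). x @ y) ` (Ew w \<times> (Mlang w - Klang w))"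
    proof
      fix s assume "s \<in> Ej w 1"
      then have s: "s \<in> Ew w" "lc w s = 1" unfolding Ej_def by auto
      show "s \<in> Rlang w \<union> (\<lambda>(x,y). x @ y) ` (Ew w \<times> (Mlang w - Klang w))"
      proof (cases "s \<in> Rlang w")
        case False
        then obtain s' m where d: "s = s' @ m" "s' \<in> Ew w" "m \<in> Mlang w"
          using E_in_R_or_dec[OF s(1)] by blast
        have "length w \<le> length m"
        proof (rule ccontr)
          assume "\<not> length w \<le> length m"
          then have "lc w s = lc w s' + 1" using near_stats(1)[OF d(2,3)] d(1) by simp
          moreover have "1 \<le> lc w s'" using lc_bounds[OF d(2) l] by simp
          ultimately show False using s(2) by simp
        qed
        then have "m \<in> Mlang w - Klang w" using MK[of m] d(3) by blast
        then have "s \<in> (\<lambda>(x,y). x @ y) ` (Ew w \<times> (Mlang w - Klang w))" using d img_cat_I by metis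
        then show ?thesis by (rule UnI2)
      qed simp
    qed
    show "Rlang w \<union> (\<lambda>(x,y). x @ y) ` (Ew w \<times> (Mlang w - Klang w)) \<subseteq> Ej w 1"
    proof
      fix s assume "s \<in> Rlang w \<union> (\<lambda>(x,y). x @ y) ` (Ew w \<times> (Mlang w - Klang w))"
      then consider "s \<in> Rlang w" | s' m where "s = s' @ m" "s' \<in> Ew w" "m \<in> Mlang w - Klang w"
        using img_cat_E by (metis UnE)
      then show "s \<in> Ej w 1"
      proof cases
        case 1 then show ?thesis using R_props(1) R_stats(1)[OF 1 l] unfolding Ej_def by blast
      next
        case 2
        then have m: "m \<in> Mlang w" "length w \<le> length m" using MK by auto
        then show ?thesis using far_stats(1)[OF 2(2) m l] E_app_M[OF 2(2) m(1)] 2(1) unfolding Ej_def by blast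
      qed
    qed
  qed
  have D: "Rlang w \<inter> (\<lambda>(x,y). x @ y) ` (Ew w \<times> (Mlang w - Klang w)) = {}"
  proof (rule equals0I)
    fix t assume "t \<in> Rlang w \<inter> (\<lambda>(x,y). x @ y) ` (Ew w \<times> (Mlang w - Klang w))"
    then have t0: "t \<in> Rlang w" "t \<in> (\<lambda>(x,y). x @ y) ` (Ew w \<times> (Mlang w - Klang w))" by simp_all
    obtain s u where t: "t = s @ u" "s \<in> Ew w" "u \<in> Mlang w - Klang w" using img_cat_E[OF t0(2)] by blast
    show False using R_not_dec[OF t(2)] t(1,3) t0(1) by simp
  qed
  have inj: "inj_on (\<lambda>(x,y). x @ y) (Ew w \<times> (Mlang w - Klang w))"
    by (rule inj_on_subset[OF inj_EM]) (rule Sigma_mono, auto)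
  have "wgf (PW p k w v) (Ej w 1) = wgf (PW p k w v) (Rlang w) + wgf (PW p k w v) ((\<lambda>(x,y). x @ y) ` (Ew w \<times> (Mlang w - Klang w)))"
    unfolding eq by (rule wgf_union[OF D])
  also have "wgf (PW p k w v) (Rlang w) = lang_gf p (Rlang w)"
    unfolding lang_gf_wgf by (rule wgf_cong) (simp add: PW_def R_stats[OF _ l])
  also have "wgf (PW p k w v) ((\<lambda>(x,y). x @ y) ` (Ew w \<times> (Mlang w - Klang w)))
      = wgf (CW p k w v) (Ew w) * wgf (\<lambda>x. of_real (wprob p x)) (Mlang w - Klang w)"
  proof (rule wgf_mult[OF inj])
    fix x y assume "x \<in> Ew w" "y \<in> Mlang w - Klang w"
    then have "y \<in> Mlang w" "length w \<le> length y" using MK by auto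
    then have "pend k w (x @ y) = num_kclumps k w x" using far_stats(2)[OF \<open>x \<in> Ew w\<close> _ _ l] by blast
    then show "PW p k w v (x @ y) = CW p k w v x * complex_of_real (wprob p y)"
      unfolding PW_def CW_def wprob_app by simp
  qed
  also have "wgf (\<lambda>x. of_real (wprob p x)) (Mlang w - Klang w) = lang_gf p (Mlang w) - lang_gf p (Klang w)"
    unfolding lang_gf_wgf by (rule wgf_diff[OF K_sub_M])
  finally show ?thesis .
qed

lemma L_F1:
  fixes p :: "'a::finite \<Rightarrow> real"
  assumes l: "0 < length w" and j: "1 \<le> j"
  shows "wgf (PW p k w v) (Ej w (Suc j)) = wgf (PW p k w v) (Ej w j) * lang_gf p (Klang w)"
proof -
  have eq: "Ej w (Suc j) = (\<lambda>(x,y). x @ y) ` (Ej w j \<times> Klang w)"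
  proof
    show "Ej w (Suc j) \<subseteq> (\<lambda>(x,y). x @ y) ` (Ej w j \<times> Klang w)"
    proof
      fix s assume "s \<in> Ej w (Suc j)"
      then have s: "s \<in> Ew w" "lc w s = Suc j" unfolding Ej_def by auto
      have nR: "s \<notin> Rlang w"
      proof
        assume "s \<in> Rlang w" then have "lc w s = 1" using R_stats(1)[OF _ l] by blast
        then show False using s j by simp
      qed
      obtain s' m where d: "s = s' @ m" "s' \<in> Ew w" "m \<in> Mlang w"
        using E_in_R_or_dec[OF s(1) nR] by blast
      have lm: "length m < length w"
      proof (rule ccontr)
        assume "\<not> length m < length w"
        then have "lc w s = 1" using far_stats(1)[OF d(2,3) _ l] d(1) by simp
        then show False using s j by simp
      qed
      then have "m \<in> Klang w" using M_short_K[OF d(3)] by simp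
      moreover have "lc w s' = j" using near_stats(1)[OF d(2,3) lm] d(1) s(2) by simp
      moreover have "s' \<in> Ej w j" using d(2) \<open>lc w s' = j\<close> unfolding Ej_def by simp
      ultimately show "s \<in> (\<lambda>(x,y). x @ y) ` (Ej w j \<times> Klang w)" using d(1) img_cat_I by metis
    qed
    show "(\<lambda>(x,y). x @ y) ` (Ej w j \<times> Klang w) \<subseteq> Ej w (Suc j)"
    proof
      fix s assume "s \<in> (\<lambda>(x,y). x @ y) ` (Ej w j \<times> Klang w)"
      then obtain s' m where d0: "s = s' @ m" "s' \<in> Ej w j" "m \<in> Klang w"
        by (rule img_cat_E)
      then have d: "s = s' @ m" "s' \<in> Ew w" "lc w s' = j" "m \<in> Klang w" unfolding Ej_def by auto
      have m: "m \<in> Mlang w" "length m < length w" using d(4) K_sub_M K_len by auto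
      show "s \<in> Ej w (Suc j)" using near_stats(1)[OF d(2) m] E_app_M[OF d(2) m(1)] d unfolding Ej_def by simp
    qed
  qed
  have inj: "inj_on (\<lambda>(x,y). x @ y) (Ej w j \<times> Klang w)"
    by (rule inj_on_subset[OF inj_EM]) (rule Sigma_mono, use K_sub_M in \<open>auto simp: Ej_def\<close>)
  show ?thesis unfolding eq lang_gf_wgf
  proof (rule wgf_mult[OF inj])
    fix x y assume "x \<in> Ej w j" "y \<in> Klang w"
    then have x: "x \<in> Ew w" and m: "y \<in> Mlang w" "length y < length w" using K_sub_M K_len unfolding Ej_def by auto
    have "pend k w (x @ y) = pend k w x" using near_stats(2)[OF x m] .
    then show "PW p k w v (x @ y) = PW p k w v x * complex_of_real (wprob p y)"
      unfolding PW_def wprob_app by simp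
  qed
qed

lemma L_F3:
  fixes p :: "'a::finite \<Rightarrow> real"
  assumes l: "0 < length w"
  shows "wgf (CW p k w v) (Ew w) $ n = (\<Sum>i\<le>n. (if Suc i = k then v else 1) * wgf (PW p k w v) (Ej w (Suc i)) $ n)"
proof -
  have eq: "{x \<in> Ew w. length x = n} = (\<Union>i\<in>{..n}. {x \<in> Ej w (Suc i). length x = n})"
  proof
    show "{x \<in> Ew w. length x = n} \<subseteq> (\<Union>i\<in>{..n}. {x \<in> Ej w (Suc i). length x = n})"
    proof
      fix x assume x: "x \<in> {x \<in> Ew w. length x = n}"
      then have b: "1 \<le> lc w x" "lc w x \<le> n" using lc_bounds[OF _ l] by auto
      then have "x \<in> {x \<in> Ej w (Suc (lc w x - 1)). length x = n}" using x unfolding Ej_def by auto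
      moreover have "lc w x - 1 \<in> {..n}" using b by simp
      ultimately show "x \<in> (\<Union>i\<in>{..n}. {x \<in> Ej w (Suc i). length x = n})" by blast
    qed
    show "(\<Union>i\<in>{..n}. {x \<in> Ej w (Suc i). length x = n}) \<subseteq> {x \<in> Ew w. length x = n}"
      unfolding Ej_def by auto
  qed
  have "wgf (CW p k w v) (Ew w) $ n = (\<Sum>i\<in>{..n}. \<Sum>x\<in>{x \<in> Ej w (Suc i). length x = n}. CW p k w v x)"
    unfolding wgf_nth eq by (rule sum.UNION_disjoint) (simp, use fin_len in blast, auto simp: Ej_def)
  also have "\<dots> = (\<Sum>i\<le>n. (if Suc i = k then v else 1) * wgf (PW p k w v) (Ej w (Suc i)) $ n)"
  proof (rule sum.cong[OF refl])
    fix i assume "i \<in> {..n}"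
    have "(\<Sum>x\<in>{x \<in> Ej w (Suc i). length x = n}. CW p k w v x) =
          (\<Sum>x\<in>{x \<in> Ej w (Suc i). length x = n}. (if Suc i = k then v else 1) * PW p k w v x)"
    proof (rule sum.cong[OF refl])
      fix x assume "x \<in> {x \<in> Ej w (Suc i). length x = n}"
      then have x: "x \<in> Ew w" "lc w x = Suc i" unfolding Ej_def by auto
      show "CW p k w v x = (if Suc i = k then v else 1) * PW p k w v x"
        unfolding CW_def PW_def numk_pend[OF x(1)] x(2) by (simp add: power_add)
    qed
    then show "(\<Sum>x\<in>{x \<in> Ej w (Suc i). length x = n}. CW p k w v x) =
          (if Suc i = k then v else 1) * wgf (PW p k w v) (Ej w (Suc i)) $ n"
      by (simp add: wgf_nth sum_distrib_left)
  qed
  finally show ?thesis .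
qed

unbundle fps_syntax

lemma mult_zero_nth:
  fixes A B :: "complex fps"
  assumes "\<And>i. i \<le> n \<Longrightarrow> A $ i = 0"
  shows "(A * B) $ n = 0"
  unfolding fps_mult_nth using assms by (intro sum.neutral) auto

lemma Kpow_nth:
  fixes K :: "complex fps"
  assumes "K $ 0 = 0"
  shows "j < m \<Longrightarrow> (K ^ m) $ j = 0"
proof (induction m arbitrary: j)
  case 0 then show ?case by simp
next
  case (Suc m)
  have "(K ^ Suc m) $ j = (\<Sum>i=0..j. K $ i * (K ^ m) $ (j - i))" by (simp add: fps_mult_nth)
  also have "\<dots> = 0"
  proof (rule sum.neutral, rule ballI)
    fix i assume "i \<in> {0..j}"
    show "K $ i * (K ^ m) $ (j - i) = 0"
    proof (cases "i = 0")
      case True then show ?thesis using assms by simp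
    next
      case False then have "j - i < m" using Suc.prems \<open>i \<in> {0..j}\<close> by auto
      then show ?thesis using Suc.IH by simp
    qed
  qed
  finally show ?case .
qed

lemma lang_gf_nth0:
  assumes "[] \<notin> L"
  shows "lang_gf p L $ 0 = 0"
proof -
  have e: "{x \<in> L. length x = 0} = {}" using assms by auto
  show ?thesis by (simp only: lang_gf_def fps_nth_Abs_fps e sum.empty of_real_0)
qed

lemma lang_gf_low:
  assumes "\<And>x. x \<in> L \<Longrightarrow> n \<le> length x" "i < n"
  shows "lang_gf p L $ i = 0"
proof -
  have e: "{x \<in> L. length x = i} = {}" using assms by fastforce
  show ?thesis by (simp only: lang_gf_def fps_nth_Abs_fps e sum.empty of_real_0)
qed

lemma div_mult_cancel:
  fixes A P :: "complex fps"
  assumes "P \<noteq> 0" "subdegree P = l" "\<And>i. i < l \<Longrightarrow> A $ i = 0"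
  shows "A / P * (P * Q) = A * Q"
proof (cases "A = 0")
  case True then show ?thesis by simp
next
  case False
  then have "subdegree A \<ge> l" using assms(3) by (intro subdegree_geI) auto
  then have "A / P * P = A" using assms by (intro fps_times_divide_eq) auto
  then show ?thesis by (metis mult.assoc)
qed

theorem mainTheorem7:
  fixes p :: "'a::finite \<Rightarrow> real" and w :: "'a list" and k :: nat and v :: complex
  assumes "card (UNIV :: 'a set) \<ge> 2"
    and "\<forall>a. p a > 0"
    and "(\<Sum>a\<in>UNIV. p a) = 1"
    and "length w \<ge> 2"
    and "k \<ge> 1"
  shows "Abs_fps (\<lambda>n. \<Sum>i. of_real (kclump_prob p w k n i) * v ^ i)
    = lang_gf p (Nlang w)
      + lang_gf p (Rlang w) / piz p w * frakK p w k v
        * (1 / (1 - (lang_gf p (Mlang w) - lang_gf p (Klang w)) / piz p w * frakK p w k v))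
        * lang_gf p (Ulang w)"
proof -
  have l: "0 < length w" using assms(4) by linarith
  define Kg where "Kg = lang_gf p (Klang w)"
  define Mg where "Mg = lang_gf p (Mlang w)"
  define Rg where "Rg = lang_gf p (Rlang w)"
  define Ug where "Ug = lang_gf p (Ulang w)"
  define Ng where "Ng = lang_gf p (Nlang w)"
  define P where "P = piz p w"
  define G where "G i = wgf (PW p k w v) (Ej w (Suc i))" for i
  define H where "H = wgf (CW p k w v) (Ew w)"
  define J where "J = (1 :: complex fps) / (1 - Kg)"
  define Q where "Q = J + fps_const (v - 1) * Kg ^ (k - 1)"
  have K0: "Kg $ 0 = 0" unfolding Kg_def
    by (rule lang_gf_nth0) (simp add: Klang_def autocorr0_def)
  have M0: "Mg $ 0 = 0" unfolding Mg_def
    by (rule lang_gf_nth0) (use M_ne in blast)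
  have J1: "J * (1 - Kg) = 1"
  proof -
    have "(1 - Kg) $ 0 \<noteq> 0" using K0 by simp
    then show ?thesis unfolding J_def using fps_divide_unit inverse_mult_eq_1 by (metis mult_1)
  qed
  have Gi: "G i = G 0 * Kg ^ i" for i
  proof (induction i)
    case 0 then show ?case by simp
  next
    case (Suc i)
    have "G (Suc i) = G i * Kg" unfolding G_def Kg_def by (rule L_F1[OF l]) simp
    then show ?case using Suc by (simp add: mult.assoc mult.commute)
  qed
  have low: "(G 0 * Kg ^ m) $ n = 0" if "n < m" for n m
  proof -
    have "(Kg ^ m * G 0) $ n = 0" by (rule mult_zero_nth) (use Kpow_nth[OF K0] that in auto)
    then show ?thesis by (simp add: mult.commute)
  qed
  have GJ: "(G 0 * J) $ n = (\<Sum>i\<le>n. (G 0 * Kg ^ i) $ n)" for n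
  proof -
    define S where "S = (\<Sum>i\<le>n. Kg ^ i)"
    have gp: "(1 - Kg) * S = 1 - Kg ^ Suc n" unfolding S_def by (rule sum_gp_basic)
    have "S = (J * (1 - Kg)) * S" using J1 by simp
    also have "\<dots> = J * ((1 - Kg) * S)" by (simp only: mult.assoc)
    also have "\<dots> = J * (1 - Kg ^ Suc n)" by (simp only: gp)
    also have "\<dots> = J - Kg ^ Suc n * J" by (simp add: right_diff_distrib mult.commute)
    finally have "J = S + Kg ^ Suc n * J" by (simp add: algebra_simps)
    then have "G 0 * J = G 0 * S + G 0 * (Kg ^ Suc n * J)" by (metis distrib_left)
    also have "G 0 * (Kg ^ Suc n * J) = Kg ^ Suc n * (G 0 * J)" by (rule mult.left_commute)
    finally have e: "G 0 * J = G 0 * S + Kg ^ Suc n * (G 0 * J)" .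
    have "(Kg ^ Suc n * (G 0 * J)) $ n = 0"
    proof (rule mult_zero_nth)
      fix i assume "i \<le> n" then show "(Kg ^ Suc n) $ i = 0" by (intro Kpow_nth[OF K0]) simp
    qed
    then have "(G 0 * J) $ n = (G 0 * S) $ n" using e by (metis add.right_neutral fps_add_nth)
    also have "(G 0 * S) $ n = (\<Sum>i\<le>n. (G 0 * Kg ^ i) $ n)"
      unfolding S_def sum_distrib_left fps_sum_nth ..
    finally show ?thesis .
  qed
  have HQ: "H = G 0 * Q"
  proof (rule fps_ext)
    fix n
    have c: "(if Suc i = k then v else 1) = 1 + (if i = k - 1 then v - 1 else 0)" for i
      using assms(5) by auto
    have "H $ n = (\<Sum>i\<le>n. (if Suc i = k then v else 1) * G i $ n)"
      unfolding H_def G_def by (rule L_F3[OF l])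
    also have "\<dots> = (\<Sum>i\<le>n. (if Suc i = k then v else 1) * (G 0 * Kg ^ i) $ n)"
      by (rule sum.cong[OF refl]) (subst Gi, rule refl)
    also have "\<dots> = (\<Sum>i\<le>n. (G 0 * Kg ^ i) $ n + (if i = k - 1 then (v - 1) * (G 0 * Kg ^ i) $ n else 0))"
    proof (rule sum.cong[OF refl])
      fix i assume "i \<in> {..n}"
      show "(if Suc i = k then v else 1) * (G 0 * Kg ^ i) $ n = (G 0 * Kg ^ i) $ n + (if i = k - 1 then (v - 1) * (G 0 * Kg ^ i) $ n else 0)"
        unfolding c by (simp add: distrib_right)
    qed
    also have "\<dots> = (\<Sum>i\<le>n. (G 0 * Kg ^ i) $ n) + (\<Sum>i\<le>n. if i = k - 1 then (v - 1) * (G 0 * Kg ^ i) $ n else 0)"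
      by (rule sum.distrib)
    also have "(\<Sum>i\<le>n. if i = k - 1 then (v - 1) * (G 0 * Kg ^ i) $ n else 0) = (v - 1) * (G 0 * Kg ^ (k - 1)) $ n"
    proof (cases "k - 1 \<le> n")
      case True then show ?thesis by (simp add: sum.delta')
    next
      case False then show ?thesis using low[of n "k - 1"] by (simp add: sum.delta')
    qed
    also have "(\<Sum>i\<le>n. (G 0 * Kg ^ i) $ n) = (G 0 * J) $ n" using GJ by simp
    also have "(G 0 * J) $ n + (v - 1) * (G 0 * Kg ^ (k - 1)) $ n = (G 0 * Q) $ n"
    proof -
      have "G 0 * Q = G 0 * J + fps_const (v - 1) * (G 0 * Kg ^ (k - 1))"
        unfolding Q_def by (simp only: distrib_left mult.left_commute)
      then show ?thesis by simp
    qed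
    finally show "H $ n = (G 0 * Q) $ n" .
  qed
  define D where "D = 1 - Q * (Mg - Kg)"
  have D0: "D $ 0 = 1" unfolding D_def using K0 M0 by simp
  have G0: "G 0 = Rg + H * (Mg - Kg)"
    unfolding G_def Rg_def H_def Mg_def Kg_def using L_F2[OF l, of p k v] by simp
  have "G 0 * D = G 0 - (G 0 * Q) * (Mg - Kg)" unfolding D_def by (simp add: algebra_simps)
  also have "\<dots> = G 0 - H * (Mg - Kg)" unfolding HQ ..
  also have "\<dots> = Rg" using G0 by simp
  finally have "G 0 * D = Rg" .
  have DI: "D * inverse D = 1" using inverse_mult_eq_1'[of D] D0 by simp
  have "G 0 = G 0 * (D * inverse D)" unfolding DI by simp
  also have "\<dots> = (G 0 * D) * inverse D" by (simp only: mult.assoc)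
  also have "\<dots> = Rg * inverse D" unfolding \<open>G 0 * D = Rg\<close> ..
  finally have G0D: "G 0 = Rg * inverse D" .
  have LHS: "Abs_fps (\<lambda>n. \<Sum>i. of_real (kclump_prob p w k n i) * v ^ i) = Ng + Rg * inverse D * Q * Ug"
    using L_T[of p w k v] L_F4[of p k w v] HQ G0D unfolding Ng_def H_def Ug_def by simp
  have pi: "wprob p w > 0" unfolding wprob_def
    by (induction w) (use assms(2) in auto)
  have P0: "P \<noteq> 0" unfolding P_def piz_def using pi by simp
  have Psub: "subdegree P = length w" unfolding P_def piz_def using pi
    by (simp add: fps_X_power_subdegree)
  have fK: "frakK p w k v = P * Q" unfolding frakK_def P_def Q_def J_def Kg_def ..
  have Rlow: "Rg $ i = 0" if "i < length w" for i
    unfolding Rg_def by (rule lang_gf_low[OF _ that]) (use R_props(1) Ew_len in blast)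
  have MKlow: "(Mg - Kg) $ i = 0" if "i < length w" for i
  proof -
    have "Mg - Kg = lang_gf p (Mlang w - Klang w)"
      unfolding Mg_def Kg_def lang_gf_wgf by (rule wgf_diff[OF K_sub_M, symmetric])
    moreover have "lang_gf p (Mlang w - Klang w) $ i = 0"
      by (rule lang_gf_low[OF _ that]) (use M_short_K in fastforce)
    ultimately show ?thesis by simp
  qed
  have r1: "Rg / P * (P * Q) = Rg * Q" by (rule div_mult_cancel[OF P0 Psub Rlow])
  have r2: "(Mg - Kg) / P * (P * Q) = (Mg - Kg) * Q" by (rule div_mult_cancel[OF P0 Psub MKlow])
  have r3: "1 / (1 - (Mg - Kg) * Q) = inverse D"
  proof -
    have "1 - (Mg - Kg) * Q = D" unfolding D_def by (simp add: mult.commute)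
    then show ?thesis using fps_divide_unit[of D 1] D0 by simp
  qed
  show ?thesis unfolding LHS
    unfolding Ng_def[symmetric] Rg_def[symmetric] P_def[symmetric] fK Mg_def[symmetric]
      Kg_def[symmetric] Ug_def[symmetric] r1 r2 r3
    by (simp add: ac_simps)
qed

end
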